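(* Let $x\neq0$ with $r(x)\neq0$, let $p\neq0$, and let $S=[s^{(1)},\dots,s^{(k)}]\in\mathbb C^{n\times k}$ satisfy $p^{\mathrm H}r(x)\neq0$ and $S^{\mathrm H}r(x)=0$. Suppose $[x,\ p,\ S]$ has full column rank, and that $(\alpha_{\mathrm{opt}},b_{\mathrm{opt}})$ is a stationary point of the function $(\alpha,b)\mapsto\rho\big(x+\alpha(I-P_{x,\rho(x_{\mathrm{opt}}),\rho(x)})[p+Sb]\big)$, where $$s=p+Sb_{\mathrm{opt}},\quad d=\alpha_{\mathrm{opt}}(I-P_{x,\rho(x_{\mathrm{opt}}),\rho(x)})s,\quad x_{\mathrm{opt}}=x+d.$$ Write $r_{\mathrm{opt}}=r(x_{\mathrm{opt}})$ and $\check F:=\check F_{\rho(x_{\mathrm{opt}}),\rho(x)}(\rho(x_{\mathrm{opt}});x)$. Then, in the nontrivial case $x_{\mathrm{opt}}\neq x$, and provided $x^{\mathrm H}\Phi(\rho(x_{\mathrm{opt}}),\rho(x))x\neq0$ and $s^{\mathrm H}\check Fs\neq0$: $\alpha_{\mathrm{opt}}\neq0$, $r_{\mathrm{opt}}\perp\mathrm{span}\{x,p,S,s,d\}$, and $$\alpha_{\mathrm{opt}}=-\frac{p^{\mathrm H}r(x)}{s^{\mathrm H}\check Fs}=-\frac{d^{\mathrm H}F(\rho(x_{\mathrm{opt}}))d}{r(x)^{\mathrm H}p},$$ $$\rho(x_{\mathrm{opt}})-\rho(x)=\frac{|r(x)^{\mathrm H}p|^2}{[x^{\mathrm H}\Phi(\rho(x_{\mathrm{opt}}),\rho(x))x][s^{\mathrm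 H}\check Fs]}=\frac{d^{\mathrm H}F(\rho(x_{\mathrm{opt}}))d}{x^{\mathrm H}\Phi(\rho(x_{\mathrm{opt}}),\rho(x))x},$$ $$r(x_{\mathrm{opt}})-r(x)=\check Fd,$$ $$b_{\mathrm{opt}}=-\big[S^{\mathrm H}\check FS\big]^{\dagger}S^{\mathrm H}\check Fp+v,$$ where $v$ is a vector satisfying $\check FSv\perp\mathrm{span}\{x,p,S,s,d\}$ and $\dagger$ denotes the Moore–Penrose inverse. Moreover, the four displayed formulas also hold in the trivial case $\alpha_{\mathrm{opt}}=0$, $d=0$, $x_{\mathrm{opt}}=x$, $\rho(x_{\mathrm{opt}})=\rho(x)$, $r(x_{\mathrm{opt}})=r(x)$.
   Context: Setting: $F(\lambda)=\sum_{k=0}^m A_k\lambda^{m-k}$ with Hermitian $A_k\in\mathbb C^{n\times n}$; $\mathcal I=(\lambda_-,\lambda_+)$ with $F(\lambda_-)$ negative definite. For $x$ such that $x^{\mathrm H}F(\lambda)x=0$ has a root in $\mathcal I$, it is assumed $\sigma(x):=x^{\mathrm H}F'(\rho(x))x>0$, so the root is unique and denoted $\rho(x)$ (Rayleigh quotient); all vectors at which $\rho$ is evaluated are assumed to be of this type. Residual: $r(x)=F(\rho(x))x$ (so $x^{\mathrm H}r(x)=0$ and $r(x)=-\tfrac12\sigma(x)\nabla\rho(x)$). Divided difference: $\Phi(\rho_1,\rho_2)=\frac{F(\rho_1)-F(\rho_2)}{\rho_1-\rho_2}$. Oblique projection: $P_{x,\rho_1,\rho_2}=\frac{xx^{\mathrm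 H}\Phi(\rho_1,\rho_2)}{x^{\mathrm H}\Phi(\rho_1,\rho_2)x}$. Projected polynomial: $\check F_{\rho_1,\rho_2}(\rho;x)=(I-P_{x,\rho_1,\rho_2}^{\mathrm H})F(\rho)(I-P_{x,\rho_1,\rho_2})$. *)

theory Defs
  imports "HOL-Analysis.Analysis"
begin

text \<open>Complex vectors: complex^'n ; complex matrices: complex^'c^'r (r rows, c columns).\<close>

definition ctrans :: "complex^'c^'r \<Rightarrow> complex^'r^'c" where
  "ctrans M = (\<chi> i j. cnj (M $ j $ i))"

definition hermitian :: "complex^'n^'n \<Rightarrow> bool" where
  "hermitian M \<longleftrightarrow> ctrans M = M"

definition cinner :: "complex^'n \<Rightarrow> complex^'n \<Rightarrow> complex" where
  "cinner u v = (\<Sum>i\<in>UNIV. cnj (u $ i) * v $ i)"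

definition cscale_mat :: "complex \<Rightarrow> complex^'c^'r \<Rightarrow> complex^'c^'r" where
  "cscale_mat c M = (\<chi> i j. c * M $ i $ j)"

definition pinv :: "complex^'c^'r \<Rightarrow> complex^'r^'c" where
  "pinv M = (THE X. M ** X ** M = M \<and> X ** M ** X = X \<and>
                    ctrans (M ** X) = M ** X \<and> ctrans (X ** M) = X ** M)"

definition Fpoly :: "(nat \<Rightarrow> complex^'n^'n) \<Rightarrow> nat \<Rightarrow> real \<Rightarrow> complex^'n^'n" where
  "Fpoly A m l = (\<Sum>k\<in>{0..m}. (l ^ (m - k)) *\<^sub>R A k)"

definition Fderiv :: "(nat \<Rightarrow> complex^'n^'n) \<Rightarrow> nat \<Rightarrow> real \<Rightarrow> complex^'n^'n" where
  "Fderiv A m l = (\<Sum>k\<in>{0..m}. (real (m - k) * l ^ (m - k - 1)) *\<^sub>R A k)"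

definition Ival :: "real \<Rightarrow> ereal \<Rightarrow> real set" where
  "Ival lm lp = {l. lm < l \<and> ereal l < lp}"

text \<open>Vectors at which the Rayleigh functional is defined: x^H F(l) x = 0 has a root
  in I, and sigma(x) = x^H F'(rho(x)) x > 0 (imposed at every root in I, which
  makes the root unique).\<close>
definition admissible :: "(nat \<Rightarrow> complex^'n^'n) \<Rightarrow> nat \<Rightarrow> real \<Rightarrow> ereal \<Rightarrow> complex^'n \<Rightarrow> bool" where
  "admissible A m lm lp x \<longleftrightarrow>
     (\<exists>l\<in>Ival lm lp. cinner x (Fpoly A m l *v x) = 0) \<and>
     (\<forall>l\<in>Ival lm lp. cinner x (Fpoly A m l *v x) = 0 \<longrightarrow> Re (cinner x (Fderiv A m l *v x)) > 0)"

definition rho :: "(nat \<Rightarrow> complex^'n^'n) \<Rightarrow> nat \<Rightarrow> real \<Rightarrow> ereal \<Rightarrow> complex^'n \<Rightarrow> real" where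
  "rho A m lm lp x = (THE l. l \<in> Ival lm lp \<and> cinner x (Fpoly A m l *v x) = 0)"

definition resid :: "(nat \<Rightarrow> complex^'n^'n) \<Rightarrow> nat \<Rightarrow> real \<Rightarrow> ereal \<Rightarrow> complex^'n \<Rightarrow> complex^'n" where
  "resid A m lm lp x = Fpoly A m (rho A m lm lp x) *v x"

definition Phi :: "(nat \<Rightarrow> complex^'n^'n) \<Rightarrow> nat \<Rightarrow> real \<Rightarrow> real \<Rightarrow> complex^'n^'n" where
  "Phi A m r1 r2 = (if r1 = r2 then Fderiv A m r1
                    else (1 / (r1 - r2)) *\<^sub>R (Fpoly A m r1 - Fpoly A m r2))"

definition Pproj :: "(nat \<Rightarrow> complex^'n^'n) \<Rightarrow> nat \<Rightarrow> complex^'n \<Rightarrow> real \<Rightarrow> real \<Rightarrow> complex^'n^'n" where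
  "Pproj A m x r1 r2 =
     cscale_mat (1 / cinner x (Phi A m r1 r2 *v x))
       ((\<chi> i j. x $ i * cnj (x $ j)) ** Phi A m r1 r2)"

definition Fcheck :: "(nat \<Rightarrow> complex^'n^'n) \<Rightarrow> nat \<Rightarrow> real \<Rightarrow> real \<Rightarrow> real \<Rightarrow> complex^'n \<Rightarrow> complex^'n^'n" where
  "Fcheck A m r1 r2 l x =
     (mat 1 - ctrans (Pproj A m x r1 r2)) ** Fpoly A m l ** (mat 1 - Pproj A m x r1 r2)"

end

theory Submission
  imports Defs
begin

declare [[coercion_enabled = false]]


lemma cinner_add_right: "cinner u (v + w) = cinner u v + cinner u w"
  by (simp add: cinner_def distrib_left sum.distrib)
lemma cinner_add_left: "cinner (u + v) w = cinner u w + cinner v w"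
  by (simp add: cinner_def distrib_right sum.distrib)
lemma cinner_diff_right: "cinner u (v - w) = cinner u v - cinner u w"
  by (simp add: cinner_def right_diff_distrib sum_subtractf)
lemma cinner_diff_left: "cinner (u - v) w = cinner u w - cinner v w"
  by (simp add: cinner_def left_diff_distrib sum_subtractf)
lemma cinner_scale_right: "cinner u (c *s v) = c * cinner u v"
  by (simp add: cinner_def sum_distrib_left ac_simps)
lemma cinner_scale_left: "cinner (c *s u) v = cnj c * cinner u v"
  by (simp add: cinner_def sum_distrib_left ac_simps)
lemma cinner_scaleR_right: "cinner u (c *\<^sub>R v) = of_real c * cinner u v"
  by (simp add: cinner_def sum_distrib_left mult.left_commute flip: scaleR_conv_of_real)
lemma cinner_zero_right[simp]: "cinner u 0 = 0"
  by (simp add: cinner_def)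
lemma cinner_zero_left[simp]: "cinner 0 u = 0"
  by (simp add: cinner_def)
lemma cinner_cnj: "cnj (cinner u v) = cinner v u"
  by (simp add: cinner_def ac_simps)
lemma cinner_sum_right: "cinner u (sum f K) = (\<Sum>k\<in>K. cinner u (f k))"
  by (induct K rule: infinite_finite_induct) (auto simp: cinner_add_right)
lemma cinner_self_eq0: "cinner u u = 0 \<longleftrightarrow> u = 0"
proof
  assume h: "cinner u u = 0"
  have e: "cinner u u = of_real (\<Sum>i\<in>UNIV. (cmod (u $ i))\<^sup>2)"
  proof -
    have "cnj z * z = of_real ((cmod z)\<^sup>2)" for z by (simp add: complex_norm_square mult.commute del: of_real_power)
    thus ?thesis by (simp add: cinner_def)
  qed
  hence "(\<Sum>i\<in>UNIV. (cmod (u $ i))\<^sup>2) = 0" using h by (metis of_real_eq_0_iff)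
  hence "\<forall>i\<in>UNIV. (cmod (u $ i))\<^sup>2 = 0"
    by (subst (asm) sum_nonneg_eq_0_iff) auto
  thus "u = 0" by (simp add: vec_eq_iff)
qed simp

lemma cinner_adj: "cinner u (M *v v) = cinner (ctrans M *v u) v"
proof -
  have "cinner u (M *v v) = (\<Sum>i\<in>UNIV. \<Sum>j\<in>UNIV. cnj (u$i) * M$i$j * v$j)"
    by (simp add: cinner_def matrix_vector_mult_def sum_distrib_left mult.assoc)
  also have "\<dots> = (\<Sum>j\<in>UNIV. \<Sum>i\<in>UNIV. cnj (u$i) * M$i$j * v$j)" by (rule sum.swap)
  also have "\<dots> = cinner (ctrans M *v u) v"
    by (simp add: cinner_def ctrans_def matrix_vector_mult_def sum_distrib_right sum_distrib_left mult_ac)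
  finally show ?thesis .
qed

lemma vec_eq_cinner: "(\<And>u. cinner u v = cinner u w) \<Longrightarrow> v = w"
  by (metis cinner_diff_right cinner_self_eq0 eq_iff_diff_eq_0)

lemma mat_axis: "(M *v axis j 1) $ i = M $ i $ j"
  by (simp add: matrix_vector_mult_def axis_def if_distrib cong: if_cong)

lemma mat_eqI: "(\<And>v. M *v v = N *v v) \<Longrightarrow> M = N"
  by (metis mat_axis vec_eq_iff)

lemma ctrans_ctrans[simp]: "ctrans (ctrans M) = M"
  by (simp add: ctrans_def vec_eq_iff)
lemma ctrans_mult: "ctrans (A ** B) = ctrans B ** ctrans A"
  by (simp add: ctrans_def matrix_matrix_mult_def vec_eq_iff ac_simps)
lemma ctrans_add: "ctrans (A + B) = ctrans A + ctrans B"
  by (simp add: ctrans_def vec_eq_iff)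
lemma ctrans_diff: "ctrans (A - B) = ctrans A - ctrans B"
  by (simp add: ctrans_def vec_eq_iff)
lemma ctrans_zero[simp]: "ctrans 0 = 0"
  by (simp add: ctrans_def vec_eq_iff)
lemma ctrans_mat1[simp]: "ctrans (mat 1) = mat 1"
  by (simp add: ctrans_def vec_eq_iff mat_def)
lemma ctrans_scaleR: "ctrans (c *\<^sub>R A) = c *\<^sub>R ctrans A"
  by (simp add: ctrans_def vec_eq_iff)
lemma ctrans_sum: "ctrans (sum f K) = (\<Sum>k\<in>K. ctrans (f k))"
  by (induct K rule: infinite_finite_induct) (auto simp: ctrans_add)

lemma herm_add: "hermitian A \<Longrightarrow> hermitian B \<Longrightarrow> hermitian (A + B)"
  by (simp add: hermitian_def ctrans_add)
lemma herm_diff: "hermitian A \<Longrightarrow> hermitian B \<Longrightarrow> hermitian (A - B)"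
  by (simp add: hermitian_def ctrans_diff)
lemma herm_scaleR: "hermitian A \<Longrightarrow> hermitian (c *\<^sub>R A)"
  by (simp add: hermitian_def ctrans_scaleR)
lemma herm_sum: "(\<And>k. k \<in> K \<Longrightarrow> hermitian (f k)) \<Longrightarrow> hermitian (sum f K)"
  by (simp add: hermitian_def ctrans_sum)

lemma herm_adj: "hermitian M \<Longrightarrow> cinner u (M *v v) = cinner (M *v u) v"
  using cinner_adj[of u M v] by (simp add: hermitian_def)
lemma herm_real: "hermitian M \<Longrightarrow> cnj (cinner u (M *v u)) = cinner u (M *v u)"
  using cinner_cnj[of u "M *v u"] herm_adj[of M u u] by simp

lemma mv_scale: "(M::complex^'n^'m) *v (c *s v) = c *s (M *v v)"
  by (simp add: vec_eq_iff matrix_vector_mult_def sum_distrib_left mult.left_commute)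
lemma mv_scaleR: "(M::complex^'n^'m) *v (c *\<^sub>R v) = c *\<^sub>R (M *v v)"
  by (simp add: vec_eq_iff matrix_vector_mult_def scaleR_sum_right mult_scaleR_right)
lemma mv_sum_mat: "(sum f K) *v v = (\<Sum>k\<in>K. f k *v v)"
  by (induct K rule: infinite_finite_induct) (auto simp: matrix_vector_mult_add_rdistrib)
lemma mv_scaleR_mat: "(c *\<^sub>R (M::complex^'n^'m)) *v v = c *\<^sub>R (M *v v)"
  by (simp add: vec_eq_iff matrix_vector_mult_def scaleR_sum_right mult_scaleR_left)
lemma cscale_mv: "cscale_mat c M *v v = c *s (M *v v)"
  by (simp add: cscale_mat_def vec_eq_iff matrix_vector_mult_def sum_distrib_left ac_simps)
lemma outer_mv: "(\<chi> i j. x $ i * cnj (y $ j)) *v v = cinner y v *s x"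
  by (simp add: vec_eq_iff matrix_vector_mult_def cinner_def sum_distrib_left ac_simps)
lemma column_cinner: "cinner (column j S) v = (ctrans S *v v) $ j"
  by (simp add: cinner_def column_def ctrans_def matrix_vector_mult_def)
lemma column_mv: "column j S = S *v axis j 1"
  by (simp add: vec_eq_iff mat_axis column_def)

lemma real_of_cnj: "cnj z = z \<Longrightarrow> z = of_real (Re z)"
  by (simp add: complex_eq_iff)

lemma no_two_roots:
  fixes f f' :: "real \<Rightarrow> real"
  assumes der: "\<And>l. DERIV f l :> f' l"
    and pos: "\<And>l. l \<in> {a..b} \<Longrightarrow> f l = 0 \<Longrightarrow> f' l > 0"
    and ab: "a < b" and fa: "f a = 0" and fb: "f b = 0"
  shows False
proof -
  have ct: "isCont f l" for l using der DERIV_isCont by blast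
  obtain d where d: "d > 0" "\<And>h. h > 0 \<Longrightarrow> h < d \<Longrightarrow> f (b - h) < f b"
    using DERIV_pos_inc_left[OF der[of b] pos[of b]] ab fb by auto
  define e where "e = min (d/2) ((b-a)/2)"
  have e: "0 < e" "e < d" "e \<le> (b-a)/2" using d ab unfolding e_def by (auto simp: min_def)
  define c where "c = b - e"
  have fc: "f c < 0" using d(2)[OF e(1) e(2)] fb by (simp add: c_def)
  have ac: "a < c" "c < b" using e ab by (auto simp: c_def)
  define K where "K = {a..c} \<inter> {l. f l = 0}"
  have "closed {l. f l = 0}"
    using ct by (intro closed_Collect_eq) (auto intro: continuous_at_imp_continuous_on)
  hence cK: "compact K" unfolding K_def by (intro compact_Int_closed) auto
  have "a \<in> K" using ac fa by (auto simp: K_def)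
  then obtain l3 where l3: "l3 \<in> K" "\<And>z. z \<in> K \<Longrightarrow> z \<le> l3"
    using compact_attains_sup[OF cK] by blast
  have l3p: "f l3 = 0" "a \<le> l3" "l3 \<le> c" using l3 by (auto simp: K_def)
  have "l3 \<noteq> c" using fc l3p by auto
  hence l3c: "l3 < c" using l3p by auto
  have "f' l3 > 0" using pos l3p ac by auto
  then obtain d' where d': "d' > 0" "\<And>h. h > 0 \<Longrightarrow> h < d' \<Longrightarrow> f l3 < f (l3 + h)"
    using DERIV_pos_inc_right[OF der[of l3]] by auto
  define h where "h = min (d'/2) ((c - l3)/2)"
  have hh: "h \<le> (c - l3)/2" "h \<le> d'/2" "h = d'/2 \<or> h = (c-l3)/2" by (auto simp: h_def min_def)
  have h: "h > 0" "h < d'" "l3 + h < c" using d'(1) l3c hh by auto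
  have fq: "f (l3 + h) > 0" using d'(2)[OF h(1) h(2)] l3p by simp
  obtain z where z: "z \<ge> l3 + h" "z \<le> c" "f z = 0"
    using IVT2[of f c 0 "l3 + h"] fc fq h ct by force
  have "z \<in> K" using z h l3p by (auto simp: K_def)
  with l3(2) have "z \<le> l3" by blast
  thus False using z h by simp
qed

lemma Fpoly_mv: "Fpoly A m l *v y = (\<Sum>k\<in>{0..m}. (l ^ (m - k)) *\<^sub>R (A k *v y))"
  by (simp add: Fpoly_def mv_sum_mat mv_scaleR_mat)
lemma Fderiv_mv: "Fderiv A m l *v y = (\<Sum>k\<in>{0..m}. (real (m - k) * l ^ (m - k - 1)) *\<^sub>R (A k *v y))"
  by (simp add: Fderiv_def mv_sum_mat mv_scaleR_mat)

lemma Fpoly_herm: "(\<And>j. j \<le> m \<Longrightarrow> hermitian (A j)) \<Longrightarrow> hermitian (Fpoly A m l)"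
  unfolding Fpoly_def by (intro herm_sum herm_scaleR) auto
lemma Fderiv_herm: "(\<And>j. j \<le> m \<Longrightarrow> hermitian (A j)) \<Longrightarrow> hermitian (Fderiv A m l)"
  unfolding Fderiv_def by (intro herm_sum herm_scaleR) auto
lemma Phi_herm: "(\<And>j. j \<le> m \<Longrightarrow> hermitian (A j)) \<Longrightarrow> hermitian (Phi A m r1 r2)"
  unfolding Phi_def by (auto intro!: herm_scaleR herm_diff Fpoly_herm Fderiv_herm)

lemma quad_Fpoly: "Re (cinner y (Fpoly A m l *v y)) = (\<Sum>k\<in>{0..m}. l ^ (m - k) * Re (cinner y (A k *v y)))"
  by (simp add: Fpoly_mv cinner_sum_right cinner_scaleR_right)
lemma quad_Fderiv: "Re (cinner y (Fderiv A m l *v y)) = (\<Sum>k\<in>{0..m}. (real (m - k) * l ^ (m - k - 1)) * Re (cinner y (A k *v y)))"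
  by (simp add: Fderiv_mv cinner_sum_right cinner_scaleR_right)

lemma quad_deriv: "DERIV (\<lambda>l. Re (cinner y (Fpoly A m l *v y))) l :> Re (cinner y (Fderiv A m l *v y))"
  unfolding quad_Fpoly quad_Fderiv
  by (auto intro!: derivative_eq_intros)

lemma rho_root:
  assumes herm: "\<And>j. j \<le> m \<Longrightarrow> hermitian (A j)" and adm: "admissible A m lm lp y"
  shows "rho A m lm lp y \<in> Ival lm lp \<and> cinner y (Fpoly A m (rho A m lm lp y) *v y) = 0"
proof -
  have realq: "cinner y (Fpoly A m l *v y) = of_real (Re (cinner y (Fpoly A m l *v y)))" for l
    by (rule real_of_cnj, rule herm_real, rule Fpoly_herm, rule herm)
  have uniq: False if "l1 \<in> Ival lm lp" "l2 \<in> Ival lm lp" "l1 < l2"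
    "cinner y (Fpoly A m l1 *v y) = 0" "cinner y (Fpoly A m l2 *v y) = 0" for l1 l2
  proof (rule no_two_roots[OF quad_deriv, of l1 l2 y A m])
    fix l assume l: "l \<in> {l1..l2}" "Re (cinner y (Fpoly A m l *v y)) = 0"
    have "l \<in> Ival lm lp" using that l
      by (auto simp: Ival_def) (meson ereal_less_eq(3) order.strict_trans1)
    moreover have "cinner y (Fpoly A m l *v y) = 0" using realq[of l] l by simp
    ultimately show "Re (cinner y (Fderiv A m l *v y)) > 0" using adm by (auto simp: admissible_def)
  qed (use that in auto)
  have "\<exists>!l. l \<in> Ival lm lp \<and> cinner y (Fpoly A m l *v y) = 0"
  proof -
    obtain l where "l \<in> Ival lm lp" "cinner y (Fpoly A m l *v y) = 0" using adm by (auto simp: admissible_def)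
    moreover have "l' = l" if "l' \<in> Ival lm lp" "cinner y (Fpoly A m l' *v y) = 0" for l'
      using uniq[of l l'] uniq[of l' l] that calculation by (cases "l < l'"; cases "l' < l") auto
    ultimately show ?thesis by blast
  qed
  thus ?thesis unfolding rho_def by (rule theI')
qed



lemma pinv_unique:
  fixes M :: "complex^'c^'r"
  assumes X1: "M ** X ** M = M" and X2: "X ** M ** X = X" and X3: "ctrans (M ** X) = M ** X" and X4: "ctrans (X ** M) = X ** M"
    and Y1: "M ** Y ** M = M" and Y2: "Y ** M ** Y = Y" and Y3: "ctrans (M ** Y) = M ** Y" and Y4: "ctrans (Y ** M) = Y ** M"
  shows "X = Y"
proof -
  have cM: "ctrans M = ctrans M ** ctrans Y ** ctrans M"
    using arg_cong[OF Y1, of ctrans] by (simp add: ctrans_mult matrix_mul_assoc)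
  have cM': "ctrans M = ctrans M ** ctrans X ** ctrans M"
    using arg_cong[OF X1, of ctrans] by (simp add: ctrans_mult matrix_mul_assoc)
  have MX: "M ** X = ctrans X ** ctrans M" using X3 by (simp add: ctrans_mult)
  have MY: "M ** Y = ctrans Y ** ctrans M" using Y3 by (simp add: ctrans_mult)
  have XM: "X ** M = ctrans M ** ctrans X" using X4 by (simp add: ctrans_mult)
  have YM: "Y ** M = ctrans M ** ctrans Y" using Y4 by (simp add: ctrans_mult)
  have "X = X ** (M ** X)" using X2 by (simp add: matrix_mul_assoc)
  also have "\<dots> = X ** ctrans X ** ctrans M" by (simp add: MX matrix_mul_assoc)
  also have "\<dots> = X ** ctrans X ** (ctrans M ** ctrans Y ** ctrans M)" using cM by simp
  also have "\<dots> = X ** (ctrans X ** ctrans M) ** (ctrans Y ** ctrans M)" by (simp add: matrix_mul_assoc)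
  also have "\<dots> = X ** (M ** X) ** (M ** Y)" by (simp add: MX MY)
  also have "\<dots> = (X ** M ** X) ** M ** Y" by (simp add: matrix_mul_assoc)
  also have "\<dots> = X ** M ** Y" using X2 by simp
  finally have 1: "X = X ** M ** Y" .
  have "Y = (Y ** M) ** Y" using Y2 by (simp add: matrix_mul_assoc)
  also have "\<dots> = ctrans M ** ctrans Y ** Y" by (simp add: YM)
  also have "\<dots> = (ctrans M ** ctrans X ** ctrans M) ** ctrans Y ** Y" using cM' by simp
  also have "\<dots> = (ctrans M ** ctrans X) ** (ctrans M ** ctrans Y) ** Y" by (simp add: matrix_mul_assoc)
  also have "\<dots> = (X ** M) ** (Y ** M) ** Y" by (simp add: XM YM)
  also have "\<dots> = X ** M ** (Y ** M ** Y)" by (simp add: matrix_mul_assoc)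
  also have "\<dots> = X ** M ** Y" using Y2 by simp
  finally show ?thesis using 1 by simp
qed

lemma mm_add_r: "((A::complex^'m^'n) + B) ** C = A ** C + B ** C"
  by (simp add: matrix_matrix_mult_def vec_eq_iff distrib_right sum.distrib)
lemma mm_diff_r: "((A::complex^'m^'n) - B) ** C = A ** C - B ** C"
  by (simp add: matrix_matrix_mult_def vec_eq_iff left_diff_distrib sum_subtractf)
lemma mm_add_l: "(C::complex^'m^'n) ** (A + B) = C ** A + C ** B"
  by (simp add: matrix_matrix_mult_def vec_eq_iff distrib_left sum.distrib)
lemma mm_diff_l: "(C::complex^'m^'n) ** (A - B) = C ** A - C ** B"
  by (simp add: matrix_matrix_mult_def vec_eq_iff right_diff_distrib sum_subtractf)

lemma orth_span:
  assumes "\<And>y. y \<in> B \<Longrightarrow> cinner y z = 0" and "y \<in> vec.span B"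
  shows "cinner y z = 0"
  using assms(2)
proof (induct rule: vec.span_induct_alt)
  case base then show ?case by simp
next
  case (step c x y)
  then show ?case using assms(1) by (simp add: cinner_add_left cinner_scale_left)
qed

lemma mm_col: "(A ** B) $ i $ j = (A *v column j B) $ i"
  by (simp add: matrix_matrix_mult_def matrix_vector_mult_def column_def)

lemma ctrans_cscale_outer:
  "ctrans (cscale_mat c (\<chi> i j. a $ i * cnj (a $ j))) = cscale_mat (cnj c) (\<chi> i j. a $ i * cnj (a $ j))"
  by (simp add: ctrans_def cscale_mat_def vec_eq_iff mult.commute)

lemma proj_exists:
  fixes C :: "(complex^'n) set"
  assumes "finite C"
  shows "\<exists>E::complex^'n^'n. ctrans E = E \<and> E ** E = E \<and> (\<forall>c\<in>C. E *v c = c) \<and> (\<forall>v. E *v v \<in> vec.span C)"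
  using assms
proof (induct C rule: finite_induct)
  case empty
  show ?case by (intro exI[of _ 0]) (simp add: vec.span_zero)
next
  case (insert a C)
  then obtain E :: "complex^'n^'n" where E: "ctrans E = E" "E ** E = E" "\<And>c. c \<in> C \<Longrightarrow> E *v c = c"
    "\<And>v. E *v v \<in> vec.span C" by blast
  have EE: "E *v (E *v v) = E *v v" for v using E(2) by (simp add: matrix_vector_mul_assoc)
  have Eadj: "cinner u (E *v v) = cinner (E *v u) v" for u v using cinner_adj[of u E v] E(1) by simp
  have spmono: "vec.span C \<subseteq> vec.span (insert a C)" by (rule vec.span_mono) auto
  define a' where "a' = a - E *v a"
  show ?case
  proof (cases "a' = 0")
    case True
    hence "E *v a = a" by (simp add: a'_def)
    then show ?thesis using E spmono by blast
  next
    case False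
    define n where "n = cinner a' a'"
    have n0: "n \<noteq> 0" using False by (simp add: n_def cinner_self_eq0)
    have cn: "cnj n = n" by (simp add: n_def cinner_cnj)
    have Ea': "E *v a' = 0" by (simp add: a'_def matrix_vector_mult_diff_distrib EE)
    have a'E: "cinner a' (E *v v) = 0" for v by (simp add: Eadj Ea')
    define E' where "E' = E + cscale_mat (1/n) (\<chi> i j. a' $ i * cnj (a' $ j))"
    have E'v: "E' *v v = E *v v + (cinner a' v / n) *s a'" for v
      by (simp add: E'_def matrix_vector_mult_add_rdistrib cscale_mv outer_mv)
    have "ctrans E' = E'"
      unfolding E'_def by (simp add: ctrans_add E(1) ctrans_cscale_outer cn)
    moreover have "E' ** E' = E'"
    proof (rule mat_eqI)
      fix v
      have "(E' ** E') *v v = E' *v (E' *v v)" by (simp add: matrix_vector_mul_assoc)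
      also have "\<dots> = E' *v v"
        unfolding E'v
        by (simp add: matrix_vector_right_distrib mv_scale EE Ea' cinner_add_right a'E cinner_scale_right
             flip: n_def add: n0)
      finally show "(E' ** E') *v v = E' *v v" .
    qed
    moreover have "\<forall>c\<in>insert a C. E' *v c = c"
    proof
      fix c assume c: "c \<in> insert a C"
      show "E' *v c = c"
      proof (cases "c = a")
        case True
        have "cinner a' a = n"
        proof -
          have "a = a' + E *v a" by (simp add: a'_def)
          hence "cinner a' a = cinner a' (a' + E *v a)" by simp
          thus ?thesis by (simp add: cinner_add_right a'E n_def)
        qed
        then show ?thesis using True n0 by (simp add: E'v a'_def)
      next
        case False
        hence "c \<in> C" using c by simp
        hence "E *v c = c" "cinner a' c = 0" using E(3) a'E[of c] by auto
        then show ?thesis by (simp add: E'v)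
      qed
    qed
    moreover have "\<forall>v. E' *v v \<in> vec.span (insert a C)"
    proof
      fix v
      have "a' \<in> vec.span (insert a C)"
        unfolding a'_def using E(4)[of a] spmono
        by (intro vec.span_diff) (auto intro: vec.span_base)
      then show "E' *v v \<in> vec.span (insert a C)"
        unfolding E'v using E(4)[of v] spmono by (intro vec.span_add vec.span_scale) auto
    qed
    ultimately show ?thesis by blast
  qed
qed

lemma pinv_exists:
  fixes M :: "complex^'k^'k"
  assumes hM: "ctrans M = M"
  shows "\<exists>X. M ** X ** M = M \<and> X ** M ** X = X \<and> ctrans (M ** X) = M ** X \<and> ctrans (X ** M) = X ** M"
proof -
  obtain E :: "complex^'k^'k" where E: "ctrans E = E" "E ** E = E" "\<And>c. c \<in> range (\<lambda>j. column j M) \<Longrightarrow> E *v c = c"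
    "\<And>v. E *v v \<in> vec.span (range (\<lambda>j. column j M))"
    using proj_exists[of "range (\<lambda>j. column j M)"] by auto
  have col: "E *v column j M = column j M" for j using E(3) by blast
  have EM: "E ** M = M" unfolding vec_eq_iff mm_col col by (simp add: column_def)
  have ME: "M ** E = M" using arg_cong[OF EM, of ctrans] by (simp add: ctrans_mult E(1) hM)
  define T where "T = M + mat 1 - E"
  have TE: "T ** E = M" by (simp add: T_def mm_add_r mm_diff_r E(2) ME)
  have ET: "E ** T = M" by (simp add: T_def mm_add_l mm_diff_l E(2) EM)
  have inj: "inj ((*v) T)"
  proof (rule injI)
    fix z1 z2 assume h: "T *v z1 = T *v z2"
    define z where "z = z1 - z2"
    have Tz: "T *v z = 0" using h by (simp add: z_def matrix_vector_mult_diff_distrib)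
    have "M *v z = E *v (T *v z)" by (simp add: matrix_vector_mul_assoc ET)
    hence Mz: "M *v z = 0" using Tz by simp
    have "z = E *v z" using Tz Mz by (simp add: T_def matrix_vector_mult_diff_rdistrib matrix_vector_mult_add_rdistrib)
    hence zs: "z \<in> vec.span (range (\<lambda>j. column j M))" using E(4)[of z] by simp
    have "cinner z z = 0"
    proof (rule orth_span[OF _ zs])
      fix y assume "y \<in> range (\<lambda>j. column j M)"
      then obtain j where "y = column j M" by blast
      then show "cinner y z = 0" by (simp add: column_cinner hM Mz)
    qed
    hence "z = 0" by (simp add: cinner_self_eq0)
    then show "z1 = z2" by (simp add: z_def)
  qed
  have "bij ((*v) T)"
    using inj vec.linear_inj_imp_surj[OF matrix_vector_mul_linear_gen inj] by (simp add: bij_def)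
  then obtain T' where T': "T ** T' = mat 1" "T' ** T = mat 1"
    using invertible_eq_bij[of T] unfolding invertible_def by blast
  have comm: "T' ** E = E ** T'"
  proof -
    have "T' ** E = T' ** E ** (T ** T')" by (simp add: T')
    also have "\<dots> = T' ** (E ** T) ** T'" by (simp add: matrix_mul_assoc)
    also have "\<dots> = T' ** (T ** E) ** T'" by (simp add: ET TE)
    also have "\<dots> = (T' ** T) ** E ** T'" by (simp add: matrix_mul_assoc)
    finally show ?thesis by (simp add: T')
  qed
  define X where "X = T' ** E"
  have MX: "M ** X = E"
  proof -
    have "M ** X = T ** E ** (T' ** E)" by (simp add: X_def TE)
    also have "\<dots> = T ** (E ** T') ** E" by (simp add: matrix_mul_assoc)
    also have "\<dots> = T ** (T' ** E) ** E" by (simp add: comm)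
    also have "\<dots> = (T ** T') ** E ** E" by (simp add: matrix_mul_assoc)
    finally show ?thesis by (simp add: T' E(2) matrix_mul_assoc[symmetric])
  qed
  have XM: "X ** M = E"
  proof -
    have "X ** M = T' ** E ** (E ** T)" by (simp add: X_def ET)
    also have "\<dots> = T' ** (E ** E) ** T" by (simp add: matrix_mul_assoc)
    also have "\<dots> = T' ** (T ** E)" by (simp add: E(2) ET TE matrix_mul_assoc[symmetric])
    finally show ?thesis by (simp add: matrix_mul_assoc T')
  qed
  show ?thesis
  proof (intro exI[of _ X] conjI)
    show "M ** X ** M = M" by (simp add: MX EM)
    have "X ** M ** X = E ** (T' ** E)" by (simp only: XM) (simp add: X_def)
    also have "\<dots> = (E ** E) ** T'" by (simp add: comm matrix_mul_assoc)
    also have "\<dots> = X" by (simp add: E(2) comm X_def)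
    finally show "X ** M ** X = X" .
    show "ctrans (M ** X) = M ** X" by (simp add: MX E(1))
    show "ctrans (X ** M) = X ** M" by (simp add: XM E(1))
  qed
qed

lemma pinv_props:
  fixes M :: "complex^'k^'k"
  assumes hM: "ctrans M = M"
  shows "M ** pinv M ** M = M"
proof -
  let ?P = "\<lambda>X. M ** X ** M = M \<and> X ** M ** X = X \<and> ctrans (M ** X) = M ** X \<and> ctrans (X ** M) = X ** M"
  obtain X where X: "?P X" using pinv_exists[OF hM] by blast
  have "\<exists>!X. ?P X"
  proof (rule ex1I[of _ X])
    show "?P X" by (rule X)
    fix Y assume "?P Y" thus "Y = X" using X pinv_unique[of M Y X] by blast
  qed
  hence "?P (pinv M)" unfolding pinv_def by (rule theI')
  thus ?thesis by simp
qed



lemma Fpoly_comp: "Fpoly A m l $ i $ j = (\<Sum>k\<in>{0..m}. of_real (l ^ (m - k)) * A k $ i $ j)"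
  unfolding Fpoly_def sum_component vector_scaleR_component by (simp add: scaleR_conv_of_real)

lemma quad_expand: "cinner y (M *v v) = (\<Sum>i\<in>UNIV. cnj (y $ i) * (\<Sum>j\<in>UNIV. M $ i $ j * v $ j))"
  by (simp add: cinner_def matrix_vector_mult_def)

lemma stat_lemma:
  fixes A :: "nat \<Rightarrow> complex^'n^'n" and x p :: "complex^'n" and Q :: "complex^'n^'n"
    and S :: "complex^'k^'n" and aopt c :: complex and bopt w :: "complex^'k"
  assumes herm: "\<And>j. j \<le> m \<Longrightarrow> hermitian (A j)"
    and adm: "\<forall>\<^sub>F (a, b) in nhds (aopt, bopt). admissible A m lm lp (x + a *s (Q *v (p + S *v b)))"
    and stat: "((\<lambda>(a, b). rho A m lm lp (x + a *s (Q *v (p + S *v b)))) has_derivative (\<lambda>_. 0)) (at (aopt, bopt))"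
    and xo_def: "xo = x + aopt *s (Q *v (p + S *v bopt))"
  shows "Re (cinner (c *s (Q *v (p + S *v bopt)) + aopt *s (Q *v (S *v w))) (Fpoly A m (rho A m lm lp xo) *v xo)) = 0"
proof -
  define Y where "Y = (\<lambda>(a, b). x + a *s (Q *v (p + S *v b)))"
  define L where "L = (\<lambda>t::real. (aopt + t *\<^sub>R c, bopt + t *\<^sub>R w))"
  define u where "u = c *s (Q *v (p + S *v bopt)) + aopt *s (Q *v (S *v w))"
  define z where "z = c *s (Q *v (S *v w))"
  define g where "g = (\<lambda>t. rho A m lm lp (Y (L t)))"
  define F0 where "F0 = Fpoly A m (rho A m lm lp xo)"
  have YL: "Y (L t) = xo + t *\<^sub>R u + (t^2) *\<^sub>R z" for t
  proof -
    have 1: "Q *v (p + S *v (bopt + t *\<^sub>R w)) = Q *v (p + S *v bopt) + t *\<^sub>R (Q *v (S *v w))"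
      by (simp add: matrix_vector_right_distrib mv_scaleR)
    have 2: "(aopt + t *\<^sub>R c) *s (V + t *\<^sub>R W) = aopt *s V + t *\<^sub>R (c *s V + aopt *s W) + (t^2) *\<^sub>R (c *s W)"
      for V W :: "complex^'n"
      by (simp add: vec_eq_iff) (simp add: scaleR_conv_of_real algebra_simps power2_eq_square)
    show ?thesis unfolding Y_def L_def case_prod_conv 1 2 xo_def u_def z_def by (simp add: add.assoc)
  qed
  have L0: "L 0 = (aopt, bopt)" by (simp add: L_def)
  have Ld: "(L has_derivative (\<lambda>h. (h *\<^sub>R c, h *\<^sub>R w))) (at 0)"
    unfolding L_def by (auto intro!: derivative_eq_intros)
  have gd: "(g has_derivative (\<lambda>_. 0)) (at 0)"
    using has_derivative_compose[OF Ld stat[folded Y_def, unfolded L0[symmetric]]]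
    by (simp add: g_def o_def Y_def case_prod_unfold)
  hence gD: "(g has_real_derivative 0) (at 0)"
    unfolding has_field_derivative_def by (simp add: lambda_zero)
  have g0: "g 0 = rho A m lm lp xo" by (simp add: g_def L0 Y_def xo_def)
  have Lc: "(L \<longlongrightarrow> (aopt, bopt)) (nhds 0)"
    using has_derivative_continuous[OF Ld] tendsto_at_iff_tendsto_nhds[of L 0] L0 by (simp add: continuous_at)
  have ev: "\<forall>\<^sub>F t in nhds 0. admissible A m lm lp (Y (L t))"
    using filterlim_iff[THEN iffD1, OF Lc, rule_format, OF adm]
    by (simp add: Y_def case_prod_unfold)
  define h where "h = (\<lambda>t. cinner (Y (L t)) (Fpoly A m (g t) *v Y (L t)))"
  have evh: "\<forall>\<^sub>F t in nhds 0. h t = 0"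
    using ev by eventually_elim (simp add: h_def g_def rho_root[OF herm])
  have h0: "h 0 = 0" using evh unfolding eventually_nhds by blast
  have evh': "\<forall>\<^sub>F t in at 0. h t = 0" unfolding eventually_at_filter using evh by (rule eventually_mono) auto
  have Yc: "((\<lambda>t. Y (L t) $ i) has_vector_derivative u $ i) (at 0)" for i
    unfolding YL by (auto intro!: derivative_eq_intros)
  have gp: "((\<lambda>t. g t ^ n) has_real_derivative 0) (at 0)" for n
    by (rule DERIV_cong, rule DERIV_pow[THEN DERIV_chain2, OF gD]) simp
  have gpc: "((\<lambda>t. of_real (g t ^ n) :: complex) has_vector_derivative 0) (at 0)" for n
    using has_vector_derivative_of_real[OF gp[of n]] by simp
  have Fc: "((\<lambda>t. Fpoly A m (g t) $ i $ j) has_vector_derivative 0) (at 0)" for i j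
    unfolding Fpoly_comp
    apply (rule has_vector_derivative_eq_rhs)
     apply (rule has_vector_derivative_sum)
     apply (rule has_vector_derivative_mult_left)
     apply (rule gpc)
    apply simp
    done
  define D where "D = (\<Sum>i\<in>UNIV. cnj (xo $ i) * (\<Sum>j\<in>UNIV. F0 $ i $ j * u $ j)
        + cnj (u $ i) * (\<Sum>j\<in>UNIV. F0 $ i $ j * xo $ j))"
  have YL0: "Y (L 0) = xo" by (simp add: YL)
  have inner: "((\<lambda>t. \<Sum>j\<in>UNIV. Fpoly A m (g t) $ i $ j * Y (L t) $ j) has_vector_derivative
      (\<Sum>j\<in>UNIV. F0 $ i $ j * u $ j)) (at 0)" for i
    apply (rule has_vector_derivative_eq_rhs)
     apply (rule has_vector_derivative_sum)
     apply (rule has_vector_derivative_mult[OF Fc Yc])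
    apply (simp add: g0 YL0 F0_def)
    done
  have hd: "(h has_vector_derivative D) (at 0)"
    unfolding h_def quad_expand
    apply (rule has_vector_derivative_eq_rhs)
     apply (rule has_vector_derivative_sum)
     apply (rule has_vector_derivative_mult[OF has_vector_derivative_cnj[OF Yc] inner])
    apply (simp add: D_def YL0 g0 F0_def add.commute)
    done
  have hz: "((\<lambda>_. 0::complex) has_vector_derivative D) (at 0)"
    unfolding has_vector_derivative_def
    by (rule has_derivative_transform_eventually[OF hd[unfolded has_vector_derivative_def] evh']) (use h0 in auto)
  have D0: "D = 0"
    by (rule vector_derivative_unique_at[OF hz has_vector_derivative_const])
  have "D = cinner xo (F0 *v u) + cinner u (F0 *v xo)"
    by (simp add: D_def quad_expand sum.distrib)
  also have "cinner xo (F0 *v u) = cnj (cinner u (F0 *v xo))"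
  proof -
    have "cinner xo (F0 *v u) = cinner (F0 *v xo) u" unfolding F0_def by (rule herm_adj[OF Fpoly_herm[OF herm]])
    thus ?thesis by (simp add: cinner_cnj)
  qed
  finally have "cnj (cinner u (F0 *v xo)) + cinner u (F0 *v xo) = 0" using D0 by simp
  hence "Re (cinner u (F0 *v xo)) = 0" by (simp add: complex_eq_iff)
  thus ?thesis by (simp add: u_def F0_def)
qed



lemma scaleR_smult: "c *\<^sub>R (v::complex^'n) = complex_of_real c *s v"
  by (simp add: vec_eq_iff) (simp add: scaleR_conv_of_real)

lemma mv_neg: "(M::complex^'n^'m) *v (- v) = - (M *v v)"
  by (simp add: vec_eq_iff matrix_vector_mult_def sum_negf)

lemma cinner_S_left: "cinner (S *v w) z = cinner w (ctrans S *v z)"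
  using cinner_adj[of w "ctrans S" z] by simp


declare [[coercion_enabled = true]]

theorem theorem2p2:
  fixes A :: "nat \<Rightarrow> complex^'n^'n" and m :: nat and lm :: real and lp :: ereal
    and x p s d xopt :: "complex^'n" and S :: "complex^'k^'n"
    and aopt :: complex and bopt :: "complex^'k"
  assumes herm: "\<And>j. j \<le> m \<Longrightarrow> hermitian (A j)"
    and interval: "ereal lm < lp"
    and negdef: "\<And>y. y \<noteq> 0 \<Longrightarrow> Re (cinner y (Fpoly A m lm *v y)) < 0"
    and x_nz: "x \<noteq> 0" and x_adm: "admissible A m lm lp x"
    and r_nz: "resid A m lm lp x \<noteq> 0"
    and p_nz: "p \<noteq> 0"
    and pr_nz: "cinner p (resid A m lm lp x) \<noteq> 0"
    and Sr: "ctrans S *v resid A m lm lp x = 0"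
    and fullrank: "\<And>a c (w :: complex^'k). a *s x + c *s p + S *v w = 0 \<Longrightarrow> a = 0 \<and> c = 0 \<and> w = 0"
    and s_def: "s = p + S *v bopt"
    and d_def: "d = aopt *s ((mat 1 - Pproj A m x (rho A m lm lp xopt) (rho A m lm lp x)) *v s)"
    and xopt_def: "xopt = x + d"
    and adm_nbhd: "\<forall>\<^sub>F (a, b) in nhds (aopt, bopt).
        admissible A m lm lp
          (x + a *s ((mat 1 - Pproj A m x (rho A m lm lp xopt) (rho A m lm lp x)) *v (p + S *v b)))"
    and stationary: "((\<lambda>(a, b). rho A m lm lp
          (x + a *s ((mat 1 - Pproj A m x (rho A m lm lp xopt) (rho A m lm lp x)) *v (p + S *v b))))
        has_derivative (\<lambda>_. 0)) (at (aopt, bopt))"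
    and xPhix_nz: "cinner x (Phi A m (rho A m lm lp xopt) (rho A m lm lp x) *v x) \<noteq> 0"
    and sFs_nz: "cinner s (Fcheck A m (rho A m lm lp xopt) (rho A m lm lp x) (rho A m lm lp xopt) x *v s) \<noteq> 0"
  shows
    "(xopt \<noteq> x \<longrightarrow>
        aopt \<noteq> 0 \<and>
        (\<forall>y \<in> vec.span ({x, p, s, d} \<union> range (\<lambda>j. column j S)).
            cinner y (resid A m lm lp xopt) = 0)) \<and>
     (let r = resid A m lm lp x; ropt = resid A m lm lp xopt;
          rx = rho A m lm lp x; ro = rho A m lm lp xopt;
          Fc = Fcheck A m ro rx ro x;
          xPx = cinner x (Phi A m ro rx *v x);
          sFs = cinner s (Fc *v s);
          dFd = cinner d (Fpoly A m ro *v d)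
      in aopt = - cinner p r / sFs \<and>
         aopt = - dFd / cinner r p \<and>
         complex_of_real (ro - rx) = complex_of_real ((cmod (cinner r p))\<^sup>2) / (xPx * sFs) \<and>
         complex_of_real (ro - rx) = dFd / xPx \<and>
         ropt - r = Fc *v d \<and>
         (\<exists>v. (\<forall>y \<in> vec.span ({x, p, s, d} \<union> range (\<lambda>j. column j S)).
                 cinner y (Fc *v (S *v v)) = 0) \<and>
              bopt = - (pinv (ctrans S ** Fc ** S) *v (ctrans S *v (Fc *v p))) + v))"
proof -
  define rx where "rx = rho A m lm lp x"
  define ro where "ro = rho A m lm lp xopt"
  define r where "r = resid A m lm lp x"
  define ropt where "ropt = resid A m lm lp xopt"
  define Fx where "Fx = Fpoly A m rx"
  define F0 where "F0 = Fpoly A m ro"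
  define Ph where "Ph = Phi A m ro rx"
  define P where "P = Pproj A m x ro rx"
  define Q where "Q = mat 1 - P"
  define Fc where "Fc = Fcheck A m ro rx ro x"
  define xPx where "xPx = cinner x (Ph *v x)"
  define sFs where "sFs = cinner s (Fc *v s)"
  define dFd where "dFd = cinner d (F0 *v d)"
  have hFx: "hermitian Fx" unfolding Fx_def by (rule Fpoly_herm[OF herm])
  have hF0: "hermitian F0" unfolding F0_def by (rule Fpoly_herm[OF herm])
  have hPh: "hermitian Ph" unfolding Ph_def by (rule Phi_herm[OF herm])
  have xPx0: "xPx \<noteq> 0" using xPhix_nz by (simp add: xPx_def Ph_def ro_def rx_def)
  have sFs0: "sFs \<noteq> 0" using sFs_nz by (simp add: sFs_def Fc_def ro_def rx_def)
  have xPxr: "cnj xPx = xPx" unfolding xPx_def by (rule herm_real[OF hPh])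
  have r_eq: "r = Fx *v x" by (simp add: r_def resid_def Fx_def rx_def)
  have ropt_eq: "ropt = F0 *v xopt" by (simp add: ropt_def resid_def F0_def ro_def)
  have Pv: "P *v v = (cinner x (Ph *v v) / xPx) *s x" for v
    by (simp add: P_def Pproj_def cscale_mv outer_mv vector_smult_assoc
        flip: matrix_vector_mul_assoc Ph_def xPx_def)
  have Qv: "Q *v v = v - (cinner x (Ph *v v) / xPx) *s x" for v
    by (simp add: Q_def matrix_vector_mult_diff_rdistrib Pv)
  have QPh: "cinner x (Ph *v (Q *v v)) = 0" for v
    using xPx0 by (simp add: Qv matrix_vector_mult_diff_distrib mv_scale cinner_diff_right cinner_scale_right
        flip: xPx_def)
  have Qx: "Q *v x = 0" using xPx0 by (simp add: Qv flip: xPx_def)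
  have QQ: "Q *v (Q *v v) = Q *v v" for v
    by (subst (1) Qv) (simp add: QPh)
  have Qadj: "cinner (Q *v u) w = cinner u (ctrans Q *v w)" for u w
    using cinner_adj[of u "ctrans Q" w] by simp
  have Qorth: "cinner (Q *v v) w = cinner v w" if "cinner x w = 0" for v w
    using that by (simp add: Qv cinner_diff_left cinner_scale_left)
  have Fc_eq: "Fc = ctrans Q ** F0 ** Q"
    by (simp add: Fc_def Fcheck_def Q_def ctrans_diff F0_def P_def)
  have Fc_v: "Fc *v v = ctrans Q *v (F0 *v (Q *v v))" for v
    by (simp add: Fc_eq flip: matrix_vector_mul_assoc)
  have Fc_inner: "cinner u (Fc *v v) = cinner (Q *v u) (F0 *v (Q *v v))" for u v
    by (simp add: Fc_v Qadj)
  have hFc: "hermitian Fc"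
    using hF0 by (simp add: hermitian_def Fc_eq ctrans_mult matrix_mul_assoc)
  have sFsr: "cnj sFs = sFs" unfolding sFs_def by (rule herm_real[OF hFc])
  have FPh: "F0 *v v = Fx *v v + (ro - rx) *\<^sub>R (Ph *v v)" for v
  proof (cases "ro = rx")
    case True then show ?thesis by (simp add: F0_def Fx_def)
  next
    case False
    then have "(ro - rx) *\<^sub>R (Ph *v v) = F0 *v v - Fx *v v"
      by (simp add: Ph_def Phi_def mv_scaleR_mat matrix_vector_mult_diff_rdistrib F0_def Fx_def)
    then show ?thesis by simp
  qed
  have xr: "cinner x r = 0" using rho_root[OF herm x_adm] by (simp add: r_eq Fx_def rx_def)
  have d_eq: "d = aopt *s (Q *v s)" unfolding Q_def P_def ro_def rx_def by (rule d_def)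
  have xopt_eq: "xopt = x + aopt *s (Q *v s)" by (simp only: xopt_def d_eq)
  have xo_eq: "x + aopt *s (Q *v (p + S *v bopt)) = xopt" by (simp add: xopt_eq s_def)
  have "admissible A m lm lp xopt"
    using adm_nbhd unfolding eventually_nhds using xo_eq by (auto simp: Q_def P_def ro_def rx_def)
  hence xoptr: "cinner xopt ropt = 0" using rho_root[OF herm] by (simp add: ropt_eq F0_def ro_def)
  have ST: "Re (cinner (c *s (Q *v s) + aopt *s (Q *v (S *v w))) ropt) = 0" for c w
    using stat_lemma[OF herm adm_nbhd stationary xo_eq[unfolded Q_def P_def ro_def rx_def, symmetric], of c w]
    by (simp add: s_def ropt_eq F0_def ro_def Q_def P_def rx_def)
  have ST1: "cinner (Q *v s) ropt = 0"
  proof -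
    have "Re (cinner (Q *v s) ropt) = 0" using ST[of 1 0] by simp
    moreover have "Re (cinner (\<i> *s (Q *v s)) ropt) = 0" using ST[of "\<i>" 0] by simp
    ultimately show ?thesis by (simp add: cinner_scale_left complex_eq_iff)
  qed
  have aopt0: "aopt \<noteq> 0"
  proof
    assume a0: "aopt = 0"
    hence "xopt = x" by (simp add: xopt_eq)
    hence "ropt = r" by (simp add: ropt_def r_def)
    hence "cinner (Q *v s) r = 0" using ST1 by simp
    hence "cinner s r = 0" using Qorth[OF xr] by simp
    moreover have "cinner s r = cinner p r"
      by (simp add: s_def cinner_add_left cinner_S_left Sr[folded r_def])
    ultimately show False using pr_nz by (simp add: r_def)
  qed
  have ST2: "cinner (Q *v (S *v w)) ropt = 0" for w
  proof -
    have "Re (cnj aopt * cinner (Q *v (S *v w)) ropt) = 0" using ST[of 0 w] by (simp add: cinner_scale_left)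
    moreover have "Re (cnj aopt * cinner (\<i> *s (Q *v (S *v w))) ropt) = 0"
      using ST[of 0 "\<i> *s w"] by (simp add: cinner_scale_left mv_scale)
    ultimately have "cnj aopt * cinner (Q *v (S *v w)) ropt = 0"
      by (simp add: cinner_scale_left complex_eq_iff algebra_simps)
    thus ?thesis using aopt0 by simp
  qed
  have Sw_r: "cinner (S *v w) r = 0" for w by (simp add: cinner_S_left Sr[folded r_def])
  have Qd: "Q *v d = d" by (simp add: d_eq mv_scale QQ)
  have Od: "cinner d ropt = 0" by (simp add: d_eq cinner_scale_left ST1)
  have Ox: "cinner x ropt = 0"
    using xoptr Od by (simp add: xopt_def cinner_add_left)
  have Os: "cinner s ropt = 0" using ST1 Qorth[OF Ox] by simp
  have OSw: "cinner (S *v w) ropt = 0" for w using ST2 Qorth[OF Ox] by simp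
  have Op: "cinner p ropt = 0"
  proof -
    have "p = s - S *v bopt" by (simp add: s_def)
    thus ?thesis using Os OSw by (simp add: cinner_diff_left)
  qed
  have spanO: "\<forall>y \<in> vec.span ({x, p, s, d} \<union> range (\<lambda>j. column j S)). cinner y ropt = 0"
  proof
    fix y assume y: "y \<in> vec.span ({x, p, s, d} \<union> range (\<lambda>j. column j S))"
    show "cinner y ropt = 0"
    proof (rule orth_span[OF _ y])
      fix z assume "z \<in> {x, p, s, d} \<union> range (\<lambda>j. column j S)"
      then show "cinner z ropt = 0" using Ox Op Os Od OSw by (auto simp: column_mv)
    qed
  qed
  have xF0x: "cinner x (F0 *v x) = complex_of_real (ro - rx) * xPx"
    using xr by (simp add: FPh cinner_add_right cinner_scaleR_right r_eq xPx_def)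
  have E1: "cinner x (F0 *v d) = - (complex_of_real (ro - rx) * xPx)"
    using Ox xF0x by (simp add: ropt_eq xopt_def matrix_vector_right_distrib cinner_add_right add_eq_0_iff)
  have ctQ: "ctrans Q *v w = w - (cinner x w / xPx) *s (Ph *v x)" for w
  proof (rule vec_eq_cinner)
    fix u
    have "cnj (cinner x (Ph *v u)) = cinner u (Ph *v x)"
      by (simp add: cinner_cnj herm_adj[OF hPh, of u x])
    hence "cinner u (ctrans Q *v w) = cinner u w - cinner u (Ph *v x) / xPx * cinner x w"
      by (simp add: Qadj[symmetric] Qv cinner_diff_left cinner_scale_left xPxr)
    thus "cinner u (ctrans Q *v w) = cinner u (w - (cinner x w / xPx) *s (Ph *v x))"
      by (simp add: cinner_diff_right cinner_scale_right)
  qed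
  have E2: "ropt - r = Fc *v d"
  proof -
    have "Fc *v d = F0 *v d - (cinner x (F0 *v d) / xPx) *s (Ph *v x)" by (simp add: Fc_v Qd ctQ)
    also have "\<dots> = F0 *v d + complex_of_real (ro - rx) *s (Ph *v x)"
      using xPx0 by (simp add: E1)
    also have "\<dots> = ropt - r"
      by (simp add: ropt_eq r_eq xopt_def matrix_vector_right_distrib FPh scaleR_smult)
    finally show ?thesis by simp
  qed
  have E3: "dFd = complex_of_real (ro - rx) * xPx"
  proof -
    have c1: "cinner d (F0 *v x) = cnj (cinner x (F0 *v d))"
      by (simp add: cinner_cnj herm_adj[OF hF0, of d x])
    have "cinner xopt ropt = cinner x (F0 *v x) + cinner x (F0 *v d) + cinner d (F0 *v x) + dFd"
      by (simp add: ropt_eq xopt_def matrix_vector_right_distrib cinner_add_right cinner_add_left dFd_def algebra_simps)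
    hence "0 = cinner x (F0 *v x) + cinner x (F0 *v d) + cinner d (F0 *v x) + dFd" using xoptr by simp
    thus ?thesis using xF0x E1 c1 xPxr by simp
  qed
  have Fcd: "Fc *v d = aopt *s (Fc *v s)"
    by (simp add: d_eq mv_scale Fc_v QQ)
  have sr: "cinner s r = cinner p r"
    by (simp add: s_def cinner_add_left Sw_r)
  have E4: "aopt * sFs = - cinner p r"
  proof -
    have "cinner s (ropt - r) = aopt * sFs" by (simp add: E2 Fcd cinner_scale_right sFs_def)
    thus ?thesis using Os sr by (simp add: cinner_diff_right)
  qed
  have aopt_eq1: "aopt = - cinner p r / sFs" using E4 sFs0 by (simp add: field_simps)
  have E5: "dFd = - (cnj aopt * cinner p r)"
  proof -
    have dPh: "cinner d (Ph *v x) = 0"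
    proof -
      have "cinner d (Ph *v x) = cnj (cinner x (Ph *v d))"
        by (simp add: cinner_cnj herm_adj[OF hPh, of d x])
      thus ?thesis by (simp add: d_eq mv_scale cinner_scale_right QPh)
    qed
    have dr: "cinner d r = cnj aopt * cinner p r"
      using Qorth[OF xr] sr by (simp add: d_eq cinner_scale_left)
    have "cinner d (F0 *v x) + dFd = 0"
      using Od by (simp add: ropt_eq xopt_def matrix_vector_right_distrib cinner_add_right dFd_def)
    moreover have "cinner d (F0 *v x) = cinner d r"
      by (simp add: FPh cinner_add_right cinner_scaleR_right dPh r_eq)
    ultimately show ?thesis using dr by (simp add: add_eq_0_iff)
  qed
  have rp: "cinner r p = cnj (cinner p r)" by (simp add: cinner_cnj)
  have rp0: "cinner r p \<noteq> 0" using pr_nz[folded r_def] rp by simp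
  have caopt: "cnj aopt = - cinner r p / sFs" using aopt_eq1 sFsr rp by simp
  have dFd_eq: "dFd = cinner r p * cinner p r / sFs" using E5 caopt by simp
  have aopt_eq2: "aopt = - dFd / cinner r p" using dFd_eq aopt_eq1 rp0 by (simp add: field_simps)
  have ro_eq2: "complex_of_real (ro - rx) = dFd / xPx" using E3 xPx0 by (simp add: field_simps)
  have nrm: "cinner r p * cinner p r = complex_of_real ((cmod (cinner r p))\<^sup>2)"
    using complex_norm_square[of "cinner r p"] cinner_cnj[of r p] by simp
  have ro_eq1: "complex_of_real (ro - rx) = complex_of_real ((cmod (cinner r p))\<^sup>2) / (xPx * sFs)"
    using ro_eq2 dFd_eq nrm by (simp add: field_simps)
  define M where "M = ctrans S ** Fc ** S"
  define g where "g = ctrans S *v (Fc *v p)"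
  have hM: "ctrans M = M"
    using hFc by (simp add: M_def ctrans_mult hermitian_def matrix_mul_assoc)
  have Mv: "M *v v = ctrans S *v (Fc *v (S *v v))" for v by (simp add: M_def flip: matrix_vector_mul_assoc)
  have SFcs: "ctrans S *v (Fc *v s) = 0"
  proof (rule vec_eq_cinner)
    fix w
    have "cinner (S *v w) (ropt - r) = 0" using OSw Sw_r by (simp add: cinner_diff_right)
    hence "aopt * cinner (S *v w) (Fc *v s) = 0" by (simp add: E2 Fcd cinner_scale_right)
    hence "cinner (S *v w) (Fc *v s) = 0" using aopt0 by simp
    thus "cinner w (ctrans S *v (Fc *v s)) = cinner w 0" by (simp add: cinner_S_left)
  qed
  have Mb: "M *v bopt = - g"
  proof -
    have "S *v bopt = s - p" by (simp add: s_def)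
    hence "M *v bopt = ctrans S *v (Fc *v s) - g"
      by (simp add: Mv g_def matrix_vector_mult_diff_distrib)
    thus ?thesis using SFcs by simp
  qed
  define X where "X = pinv M"
  have MXM: "M ** X ** M = M" unfolding X_def by (rule pinv_props[OF hM])
  define v where "v = bopt + X *v g"
  have Mv0: "M *v v = 0"
  proof -
    have "M *v (X *v g) = (M ** X) *v (- (M *v bopt))" by (simp add: Mb matrix_vector_mul_assoc)
    also have "\<dots> = - ((M ** X ** M) *v bopt)" by (simp add: mv_neg matrix_vector_mul_assoc)
    also have "\<dots> = g" using MXM Mb by simp
    finally have "M *v (X *v g) = g" .
    thus ?thesis by (simp add: v_def matrix_vector_right_distrib Mb)
  qed
  have bopt_eq: "bopt = - (X *v g) + v" by (simp add: v_def)
  define W where "W = Fc *v (S *v v)"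
  have SW: "cinner (S *v w) W = 0" for w by (simp add: W_def cinner_S_left Mv[symmetric] Mv0)
  have xW: "cinner x W = 0" by (simp add: W_def Fc_inner Qx)
  have pW: "cinner p W = 0"
  proof -
    have "cinner W p = cinner (S *v v) (Fc *v p)"
      by (simp add: W_def herm_adj[OF hFc, of "S *v v" p])
    also have "\<dots> = cinner v g" by (simp add: cinner_S_left g_def)
    also have "\<dots> = - cinner v (M *v bopt)" by (simp add: Mb cinner_def sum_negf)
    also have "\<dots> = - cinner (M *v v) bopt" using cinner_adj[of v M bopt] hM by simp
    also have "\<dots> = 0" by (simp add: Mv0)
    finally show ?thesis by (metis cinner_cnj complex_cnj_zero)
  qed
  have sW: "cinner s W = 0" using pW SW by (simp add: s_def cinner_add_left)
  have dW: "cinner d W = 0"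
  proof -
    have "cinner (Q *v s) W = cinner s W" by (simp add: W_def Fc_inner QQ)
    thus ?thesis using sW by (simp add: d_eq cinner_scale_left)
  qed
  have spanW: "\<forall>y \<in> vec.span ({x, p, s, d} \<union> range (\<lambda>j. column j S)). cinner y (Fc *v (S *v v)) = 0"
  proof
    fix y assume y: "y \<in> vec.span ({x, p, s, d} \<union> range (\<lambda>j. column j S))"
    show "cinner y (Fc *v (S *v v)) = 0"
    proof (rule orth_span[OF _ y])
      fix z assume "z \<in> {x, p, s, d} \<union> range (\<lambda>j. column j S)"
      then show "cinner z (Fc *v (S *v v)) = 0" using xW pW sW dW SW by (auto simp: column_mv W_def)
    qed
  qed
  have main: "aopt = - cinner p r / sFs \<and> aopt = - dFd / cinner r p \<and>
      complex_of_real (ro - rx) = complex_of_real ((cmod (cinner r p))\<^sup>2) / (xPx * sFs) \<and>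
      complex_of_real (ro - rx) = dFd / xPx \<and> ropt - r = Fc *v d \<and>
      (\<exists>v. (\<forall>y \<in> vec.span ({x, p, s, d} \<union> range (\<lambda>j. column j S)). cinner y (Fc *v (S *v v)) = 0) \<and>
         bopt = - (pinv (ctrans S ** Fc ** S) *v (ctrans S *v (Fc *v p))) + v)"
    using aopt_eq1 aopt_eq2 ro_eq1 ro_eq2 E2 spanW bopt_eq by (auto simp: X_def M_def g_def)
  have first: "xopt \<noteq> x \<longrightarrow> aopt \<noteq> 0 \<and>
        (\<forall>y \<in> vec.span ({x, p, s, d} \<union> range (\<lambda>j. column j S)). cinner y ropt = 0)"
    using aopt0 spanO by blast
  show ?thesis
    using first[unfolded ropt_def] main[unfolded sFs_def dFd_def xPx_def Fc_def Ph_def F0_def ropt_def r_def ro_def rx_def]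
    unfolding Let_def by blast
qed

end
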